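(* Let $r$ be a positive integer, and let $\ell$ and $k$ be nonnegative integers such that $k\geq b(r)+2$. Suppose $d\in B_r$ satisfies $d<p_{k+1}-r$ and $d(p_{k+\ell}-r)<(d+1)(p_k-r)$. If $\displaystyle n=d\,p_{k+\ell}\prod_{i=b(r)+1}^{k-1}p_i$, then $n\in F_r$.
   Context: $p_i$ denotes the $i$-th prime. For a positive integer $r$, the Schemmel totient function $S_r$ is the multiplicative arithmetic function with $S_r(p^{\alpha})=0$ if $p\leq r$ and $S_r(p^{\alpha})=p^{\alpha-1}(p-r)$ if $p>r$, for all primes $p$ and positive integers $\alpha$ (and $S_r(1)=1$). $B_r=\{n\in\mathbb{N}: S_r(n)>0\}$, i.e. the set of positive integers whose smallest prime factor exceeds $r$, together with $1$. $F_r$ (the sparsely Schemmel totient numbers of order $r$) is the set of $n\in B_r$ such that $S_r(n)<S_r(m)$ for all $m\in B_r$ with $m>n$. $b(1)=0$, and for $r\geq 2$, $b(r)$ is the largest integer with $p_{b(r)}\leq r$. *)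

theory Defs
  imports "HOL-Computational_Algebra.Primes" "HOL-Library.Infinite_Set"
begin

text \<open>The i-th prime, 1-indexed: pr 1 = 2, pr 2 = 3, ... (pr 0 is a junk value).\<close>
definition pr :: "nat \<Rightarrow> nat" where
  "pr i = enumerate {q::nat. prime q} (i - 1)"

text \<open>Schemmel totient S_r, multiplicative with S_r(p^a) = 0 if p \<le> r,
  p^(a-1) (p - r) otherwise; S_r 1 = 1 (empty product). Only meaningful for n > 0.\<close>
definition schemmel :: "nat \<Rightarrow> nat \<Rightarrow> nat" where
  "schemmel r n = (\<Prod>p\<in>prime_factors n.
      (if p \<le> r then 0 else p ^ (multiplicity p n - 1) * (p - r)))"

definition B_set :: "nat \<Rightarrow> nat set" where
  "B_set r = {n. n > 0 \<and> schemmel r n > 0}"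

definition F_set :: "nat \<Rightarrow> nat set" where
  "F_set r = {n \<in> B_set r. \<forall>m\<in>B_set r. m > n \<longrightarrow> schemmel r n < schemmel r m}"

definition bidx :: "nat \<Rightarrow> nat" where
  "bidx r = (if r \<le> 1 then 0 else (GREATEST j. j \<ge> 1 \<and> pr j \<le> r))"

end

theory Submission
  imports Defs Complex_Main
begin

lemma inf_primes: "infinite {q::nat. prime q}" using primes_infinite by blast

lemma pr_prime: "prime (pr i)"
  unfolding pr_def using enumerate_in_set[OF inf_primes] by blast

lemma pr_less_iff: "i \<ge> 1 \<Longrightarrow> j \<ge> 1 \<Longrightarrow> pr i < pr j \<longleftrightarrow> i < j"
  unfolding pr_def using enumerate_mono_iff[OF inf_primes] by auto

lemma pr_le_iff: "i \<ge> 1 \<Longrightarrow> j \<ge> 1 \<Longrightarrow> pr i \<le> pr j \<longleftrightarrow> i \<le> j"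
  using pr_less_iff by (meson not_le)

lemma pr_eq_iff: "i \<ge> 1 \<Longrightarrow> j \<ge> 1 \<Longrightarrow> pr i = pr j \<longleftrightarrow> i = j"
  using pr_less_iff[of i j] pr_less_iff[of j i] by (metis less_irrefl nat_neq_iff)

lemma pr_surj: "prime (q::nat) \<Longrightarrow> \<exists>i\<ge>1. pr i = q"
proof -
  assume "prime q"
  then obtain j where "enumerate {q::nat. prime q} j = q"
    using enumerate_Ex[OF inf_primes] by blast
  then show ?thesis unfolding pr_def by (intro exI[of _ "Suc j"]) auto
qed

lemma pr_1: "pr 1 = 2" unfolding pr_def
  by (simp add: enumerate_0 Least_equality prime_ge_2_nat)

lemma pr_ge: "i \<ge> 1 \<Longrightarrow> i \<le> pr i"
proof (induction i rule: dec_induct)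
  case base then show ?case using pr_1 by simp
next
  case (step n) then show ?case using pr_less_iff[of n "Suc n"] by simp
qed

lemma bidx_prop:
  assumes "r \<ge> 1" "j \<ge> 1"
  shows "pr j \<le> r \<longleftrightarrow> j \<le> bidx r"
proof (cases "r \<le> 1")
  case True
  then have "r = 1" using assms by auto
  moreover have "pr j \<ge> 2" using pr_prime prime_ge_2_nat by blast
  ultimately show ?thesis using assms True unfolding bidx_def by auto
next
  case False
  let ?P = "\<lambda>j. j \<ge> 1 \<and> pr j \<le> r"
  have p1: "pr 1 = 2" by (rule pr_1)
  have ex: "?P 1" using p1 False by auto
  have bd: "\<forall>y. ?P y \<longrightarrow> y \<le> r" using pr_ge le_trans by blast
  have b: "bidx r = (GREATEST j. ?P j)" using False unfolding bidx_def by auto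
  have Pb: "?P (bidx r)" unfolding b by (rule GreatestI_nat[of ?P 1 r]) (use ex bd in blast)+
  show ?thesis
  proof
    assume "pr j \<le> r" then show "j \<le> bidx r" unfolding b
      using Greatest_le_nat[of ?P j r] bd assms by blast
  next
    assume "j \<le> bidx r" then show "pr j \<le> r" using Pb pr_le_iff assms by (meson le_trans)
  qed
qed

lemma maxT:
  assumes hb: "\<forall>j\<ge>1. pr j \<le> r \<longleftrightarrow> j \<le> b"
    and fin: "finite T" and ne: "T \<noteq> {}" and pT: "\<forall>p\<in>T. prime p \<and> r < p"
  shows "pr (b + card T) \<le> Max T"
proof (rule ccontr)
  assume "\<not> pr (b + card T) \<le> Max T"
  then have lt: "Max T < pr (b + card T)" by simp
  have "T \<subseteq> pr ` {b+1..<b + card T}"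
  proof
    fix p assume pT': "p \<in> T"
    then obtain i where i: "i \<ge> 1" "pr i = p" using pr_surj pT by blast
    have pl: "p < pr (b + card T)" using lt Max_ge[OF fin pT'] by simp
    have ct: "card T \<ge> 1" using fin ne by (simp add: Suc_leI card_gt_0_iff)
    have "i < b + card T" using pr_less_iff[of i "b + card T"] i pl ct by simp
    moreover have "\<not> i \<le> b"
    proof -
      have "r < pr i" using pT pT' i by auto
      moreover have "pr i \<le> r \<longleftrightarrow> i \<le> b" using hb i(1) by simp
      ultimately show ?thesis by simp
    qed
    ultimately show "p \<in> pr ` {b+1..<b + card T}" using i by auto
  qed
  then have "card T \<le> card (pr ` {b+1..<b + card T})" by (simp add: card_mono)
  also have "\<dots> \<le> card {b+1..<b + card T}" by (rule card_image_le) simp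
  also have "\<dots> < card T" using fin ne by (simp add: card_gt_0_iff)
  finally show False by simp
qed

lemma hb_gt: "\<forall>j\<ge>1. pr j \<le> r \<longleftrightarrow> j \<le> b \<Longrightarrow> b < i \<Longrightarrow> r < pr i"
proof -
  assume h: "\<forall>j\<ge>1. pr j \<le> r \<longleftrightarrow> j \<le> b" and bi: "b < i"
  then have "pr i \<le> r \<longleftrightarrow> i \<le> b" by simp
  then show ?thesis using bi by simp
qed

lemma prod_ge_gen:
  fixes f :: "nat \<Rightarrow> real"
  assumes hb: "\<forall>j\<ge>1. pr j \<le> r \<longleftrightarrow> j \<le> b"
    and mono: "\<And>x y. r < x \<Longrightarrow> x \<le> y \<Longrightarrow> f x \<le> f y"
    and nn: "\<And>x. r < x \<Longrightarrow> 0 \<le> f x"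
  shows "finite T \<Longrightarrow> card T = t \<Longrightarrow> \<forall>p\<in>T. prime p \<and> r < p \<Longrightarrow>
     (\<Prod>i\<in>{b+1..b+t}. f (pr i)) \<le> (\<Prod>p\<in>T. f p)"
proof (induction t arbitrary: T)
  case 0
  then show ?case by simp
next
  case (Suc t)
  then have ne: "T \<noteq> {}" by auto
  define s where "s = Max T"
  have sT: "s \<in> T" using Max_in Suc.prems ne s_def by blast
  have c': "card (T - {s}) = t" using Suc.prems sT by simp
  have IH: "(\<Prod>i\<in>{b+1..b+t}. f (pr i)) \<le> (\<Prod>p\<in>T - {s}. f p)"
    using Suc.IH[of "T - {s}"] Suc.prems c' by auto
  have g: "pr (b + Suc t) \<le> s" using maxT[OF hb _ ne] Suc.prems s_def by auto
  have gr: "r < pr (b + Suc t)" using hb[rule_format, of "b + Suc t"] by auto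
  have e1: "(\<Prod>i\<in>{b+1..b+Suc t}. f (pr i)) = f (pr (b + Suc t)) * (\<Prod>i\<in>{b+1..b+t}. f (pr i))"
    by (simp add: prod.nat_ivl_Suc')
  have e2: "(\<Prod>p\<in>T. f p) = f s * (\<Prod>p\<in>T - {s}. f p)"
    using Suc.prems sT by (simp add: prod.remove)
  have nn2: "0 \<le> (\<Prod>i\<in>{b+1..b+t}. f (pr i))"
  proof (rule prod_nonneg)
    fix i assume "i \<in> {b+1..b+t}"
    then have "r < pr i" using hb[rule_format, of i] by auto
    then show "0 \<le> f (pr i)" by (rule nn)
  qed
  have fs: "0 \<le> f s" using nn Suc.prems(3) sT by blast
  show ?case unfolding e1 e2
    by (rule mult_mono[OF mono[OF gr g] IH fs nn2])
qed

lemma swap_ineq: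
  fixes g s Y r :: real
  assumes "0 < g" "g \<le> s" "g \<le> Y" "0 \<le> r"
  shows "(g - r) * (s * Y / g - r) \<le> (s - r) * (Y - r)"
proof -
  have "(s - r) * (Y - r) - (g - r) * (s * Y / g - r) = r * (s - g) * (Y - g) / g"
    using assms by (simp add: field_simps)
  moreover have "r * (s - g) * (Y - g) / g \<ge> 0" using assms by simp
  ultimately show ?thesis by linarith
qed


lemma L3:
  fixes y :: real
  assumes hb: "\<forall>j\<ge>1. pr j \<le> r \<longleftrightarrow> j \<le> b"
  shows "finite T \<Longrightarrow> card T = t \<Longrightarrow> \<forall>p\<in>T. prime p \<and> r < p \<Longrightarrow> \<forall>p\<in>T. real p \<le> y \<Longrightarrow> 0 \<le> y \<Longrightarrow>
     (\<Prod>i\<in>{b+1..b+t}. real (pr i) - real r) * (y * (\<Prod>p\<in>T. real p) / (\<Prod>i\<in>{b+1..b+t}. real (pr i)) - real r)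
     \<le> (\<Prod>p\<in>T. real p - real r) * (y - real r)"
proof (induction t arbitrary: T)
  case 0
  then show ?case by simp
next
  case (Suc t)
  then have ne: "T \<noteq> {}" by auto
  define s where "s = Max T"
  have sT: "s \<in> T" using Max_in Suc.prems ne s_def by blast
  have c': "card (T - {s}) = t" using Suc.prems sT by simp
  define V' where "V' = (\<Prod>i\<in>{b+1..b+t}. real (pr i) - real r)"
  define P' where "P' = (\<Prod>i\<in>{b+1..b+t}. real (pr i))"
  define X' where "X' = (\<Prod>p\<in>T-{s}. real p)"
  define U' where "U' = (\<Prod>p\<in>T-{s}. real p - real r)"
  define g where "g = real (pr (b + Suc t))"
  define Y where "Y = y * X' / P'"
  have IH: "V' * (Y - r) \<le> U' * (y - r)"
    unfolding V'_def Y_def X'_def P'_def U'_def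
    using Suc.IH[of "T - {s}"] Suc.prems c' by auto
  have gs: "g \<le> real s" unfolding g_def using maxT[OF hb _ ne] Suc.prems s_def by auto
  have gr: "real r < g" unfolding g_def using hb[rule_format, of "b + Suc t"] by auto
  have prgt: "\<forall>i\<in>{b+1..b+t}. r < pr i" using hb_gt[OF hb] by auto
  have V'nn: "0 \<le> V'" unfolding V'_def using prgt by (auto intro!: prod_nonneg simp: less_imp_le)
  have P'pos: "0 < P'" unfolding P'_def using prgt by (auto intro!: prod_pos)
  have XP: "P' \<le> X'" unfolding P'_def X'_def
    by (rule prod_ge_gen[OF hb, of real]) (use Suc.prems c' in auto)
  have "y \<le> Y" unfolding Y_def using XP P'pos Suc.prems(5)
    by (simp add: le_divide_eq mult_left_mono)
  moreover have "real s \<le> y" using Suc.prems sT by auto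
  ultimately have gY: "g \<le> Y" using gs by linarith
  have e1: "(\<Prod>i\<in>{b+1..b+Suc t}. real (pr i) - real r) = (g - r) * V'"
    unfolding V'_def g_def by (simp add: prod.nat_ivl_Suc')
  have e2: "(\<Prod>i\<in>{b+1..b+Suc t}. real (pr i)) = g * P'"
    unfolding P'_def g_def by (simp add: prod.nat_ivl_Suc')
  have e3: "(\<Prod>p\<in>T. real p) = real s * X'"
    unfolding X'_def using Suc.prems sT by (simp add: prod.remove)
  have e4: "(\<Prod>p\<in>T. real p - real r) = (real s - r) * U'"
    unfolding U'_def using Suc.prems sT by (simp add: prod.remove)
  have "(g - r) * V' * (y * (real s * X') / (g * P') - r) = V' * ((g - r) * (real s * Y / g - r))"
    unfolding Y_def by (simp add: field_simps)
  also have "\<dots> \<le> V' * ((real s - r) * (Y - r))"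
    by (rule mult_left_mono[OF swap_ineq V'nn]) (use gr gs gY in auto)
  also have "\<dots> = (real s - r) * (V' * (Y - r))" by simp
  also have "\<dots> \<le> (real s - r) * (U' * (y - r))"
    by (rule mult_left_mono[OF IH]) (use Suc.prems sT in auto)
  finally show ?case unfolding e1 e2 e3 e4 by simp
qed

lemma B_char: "m \<in> B_set r \<longleftrightarrow> m > 0 \<and> (\<forall>p\<in>prime_factors m. r < p)"
proof -
  have "schemmel r m > 0 \<longleftrightarrow> (\<forall>p\<in>prime_factors m. r < p)" (is "?L \<longleftrightarrow> ?R")
  proof -
    have "?L \<longleftrightarrow> \<not> (\<exists>p\<in>prime_factors m. (if p \<le> r then 0 else p ^ (multiplicity p m - 1) * (p - r)) = 0)"
      unfolding schemmel_def by (simp add: prod_zero_iff)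
    also have "\<dots> \<longleftrightarrow> ?R"
    proof -
      have "\<And>p. p \<in> prime_factors m \<Longrightarrow> (if p \<le> r then 0 else p ^ (multiplicity p m - 1) * (p - r)) = 0 \<longleftrightarrow> p \<le> r"
      proof -
        fix p assume "p \<in> prime_factors m"
        then have "p > 0" using prime_gt_0_nat by blast
        then show "(if p \<le> r then 0 else p ^ (multiplicity p m - 1) * (p - r)) = 0 \<longleftrightarrow> p \<le> r" by auto
      qed
      then show ?thesis by (auto simp: not_le)
    qed
    finally show ?thesis .
  qed
  then show ?thesis unfolding B_set_def by auto
qed

lemma S_rep:
  assumes "m \<in> B_set r"
  shows "\<exists>c. c \<ge> 1 \<and> m = c * (\<Prod>p\<in>prime_factors m. p) \<and>
           schemmel r m = c * (\<Prod>p\<in>prime_factors m. p - r)"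
proof -
  have m0: "m > 0" and gt: "\<forall>p\<in>prime_factors m. r < p" using assms B_char by auto
  define c where "c = (\<Prod>p\<in>prime_factors m. p ^ (multiplicity p m - 1))"
  have "m = (\<Prod>p\<in>prime_factors m. p ^ multiplicity p m)" using prime_factorization_nat m0 .
  also have "\<dots> = (\<Prod>p\<in>prime_factors m. p ^ (multiplicity p m - 1) * p)"
  proof (rule prod.cong)
    fix p assume "p \<in> prime_factors m"
    then have "multiplicity p m > 0" by (simp add: prime_factors_multiplicity)
    then show "p ^ multiplicity p m = p ^ (multiplicity p m - 1) * p"
      by (cases "multiplicity p m") auto
  qed simp
  also have "\<dots> = c * (\<Prod>p\<in>prime_factors m. p)" unfolding c_def by (simp add: prod.distrib)
  finally have e1: "m = c * (\<Prod>p\<in>prime_factors m. p)" .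
  have "schemmel r m = (\<Prod>p\<in>prime_factors m. p ^ (multiplicity p m - 1) * (p - r))"
    unfolding schemmel_def by (rule prod.cong) (use gt in auto)
  also have "\<dots> = c * (\<Prod>p\<in>prime_factors m. p - r)" unfolding c_def by (simp add: prod.distrib)
  finally have e2: "schemmel r m = c * (\<Prod>p\<in>prime_factors m. p - r)" .
  have "0 < c * (\<Prod>p\<in>prime_factors m. p)" using m0 e1 by metis
  then have "c \<noteq> 0" by auto
  then show ?thesis using e1 e2 by (intro exI[of _ c]) auto
qed

lemma S_real:
  assumes "m \<in> B_set r" "m = c * (\<Prod>p\<in>prime_factors m. p)"
    "schemmel r m = c * (\<Prod>p\<in>prime_factors m. p - r)"
  shows "real (schemmel r m) = real c * (\<Prod>p\<in>prime_factors m. real p - real r)"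
    and "real (schemmel r m) = real m * (\<Prod>p\<in>prime_factors m. 1 - real r / real p)"
proof -
  have gt: "\<forall>p\<in>prime_factors m. r < p" using assms B_char by auto
  show 1: "real (schemmel r m) = real c * (\<Prod>p\<in>prime_factors m. real p - real r)"
    unfolding assms(3) using gt by (simp add: of_nat_prod of_nat_diff less_imp_le)
  have "real m * (\<Prod>p\<in>prime_factors m. 1 - real r / real p)
     = real c * ((\<Prod>p\<in>prime_factors m. real p) * (\<Prod>p\<in>prime_factors m. 1 - real r / real p))"
    by (subst assms(2)) (simp add: of_nat_prod)
  also have "\<dots> = real c * (\<Prod>p\<in>prime_factors m. real p * (1 - real r / real p))"
    by (simp add: prod.distrib)
  also have "\<dots> = real c * (\<Prod>p\<in>prime_factors m. real p - real r)"
  proof -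
    have "(\<Prod>p\<in>prime_factors m. real p * (1 - real r / real p)) = (\<Prod>p\<in>prime_factors m. real p - real r)"
    proof (rule prod.cong)
      fix p assume "p \<in> prime_factors m"
      then have "real p > 0" using prime_gt_0_nat by auto
      then show "real p * (1 - real r / real p) = real p - real r" by (simp add: field_simps)
    qed simp
    then show ?thesis by simp
  qed
  finally show "real (schemmel r m) = real m * (\<Prod>p\<in>prime_factors m. 1 - real r / real p)"
    using 1 by simp
qed

lemma frac_facts:
  assumes "(r::nat) < x"
  shows "0 < 1 - real r / real x" "1 - real r / real x \<le> 1"
proof -
  have a: "real r < real x" "0 < real x" using assms by auto
  then have "real r / real x < 1" by (simp add: divide_less_eq)
  then show "0 < 1 - real r / real x" by simp
  show "1 - real r / real x \<le> 1" using a by simp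
qed

lemma prod_le_sub:
  fixes f :: "nat \<Rightarrow> real"
  assumes "finite B" "A \<subseteq> B" "\<And>x. x \<in> B \<Longrightarrow> 0 \<le> f x \<and> f x \<le> 1"
  shows "prod f B \<le> prod f A"
proof -
  have "prod f B = prod f (B - A) * prod f A" using prod.subset_diff[OF assms(2,1)] .
  moreover have "prod f (B - A) \<le> 1" by (rule prod_le_1) (use assms(3) in auto)
  moreover have "0 \<le> prod f A" by (rule prod_nonneg) (use assms in auto)
  moreover have "0 \<le> prod f (B - A)" by (rule prod_nonneg) (use assms in auto)
  ultimately show ?thesis by (simp add: mult_left_le_one_le)
qed

lemma prod_ge_sub:
  fixes f :: "nat \<Rightarrow> real"
  assumes "finite B" "A \<subseteq> B" "\<And>x. x \<in> B \<Longrightarrow> 1 \<le> f x"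
  shows "prod f A \<le> prod f B"
proof (rule prod_mono2)
  fix a assume "a \<in> A"
  then have "1 \<le> f a" using assms by auto
  then show "0 \<le> f a" by linarith
qed (use assms in auto)

theorem theorem2p1:
  fixes r l k d n :: nat
  assumes "r \<ge> 1"
    and "k \<ge> bidx r + 2"
    and "d \<in> B_set r"
    and "int d < int (pr (k + 1)) - int r"
    and "int d * (int (pr (k + l)) - int r) < (int d + 1) * (int (pr k) - int r)"
    and "n = d * pr (k + l) * (\<Prod>i\<in>{bidx r + 1..k - 1}. pr i)"
  shows "n \<in> F_set r"
proof -
  define b where "b = bidx r"
  have hb: "\<forall>j\<ge>1. pr j \<le> r \<longleftrightarrow> j \<le> b" unfolding b_def using bidx_prop assms(1) by blast
  define u where "u = k - 1 - b"
  have u1: "u \<ge> 1" and ku: "k = Suc (b + u)" using assms(2) unfolding u_def b_def by auto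
  define q where "q = pr (k + l)"
  define Idx where "Idx = {b+1..b+u}"
  define Pn where "Pn = (\<Prod>i\<in>Idx. pr i)"
  define V where "V = (\<Prod>i\<in>Idx. real (pr i) - real r)"
  define W where "W = (\<Prod>i\<in>Idx. 1 - real r / real (pr i))"
  have neq: "n = d * q * Pn" unfolding q_def Pn_def Idx_def using assms(6) ku b_def by simp
  have Idxgt: "\<And>i. i \<in> Idx \<Longrightarrow> r < pr i" unfolding Idx_def using hb_gt[OF hb] by auto
  have qgt: "r < q" unfolding q_def using hb_gt[OF hb] ku by auto
  have rpos: "real r \<ge> 1" using assms(1) by simp
  have Pnpos: "real Pn > 0" unfolding Pn_def using pr_prime prime_gt_0_nat by (auto simp: of_nat_prod intro!: prod_pos)
  have Vpos: "V > 0" unfolding V_def using Idxgt by (auto intro!: prod_pos)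
  have Wpos: "W > 0" unfolding W_def by (rule prod_pos) (use Idxgt frac_facts(1) in blast)
  have PW: "real Pn * W = V"
  proof -
    have "real Pn * W = (\<Prod>i\<in>Idx. real (pr i) * (1 - real r / real (pr i)))"
      unfolding Pn_def W_def by (simp add: of_nat_prod prod.distrib)
    also have "\<dots> = V" unfolding V_def
    proof (rule prod.cong)
      fix i assume "i \<in> Idx"
      then have "real (pr i) > 0" using Idxgt by (metis gr_implies_not0 of_nat_0_less_iff neq0_conv)
      then show "real (pr i) * (1 - real r / real (pr i)) = real (pr i) - real r" by (simp add: field_simps)
    qed simp
    finally show ?thesis .
  qed
  have d0: "d > 0" and dpf: "\<forall>p\<in>prime_factors d. r < p" using assms(3) B_char by auto
  have qprime: "prime q" unfolding q_def by (rule pr_prime)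
  have n0: "n > 0" using neq d0 qgt Pnpos by auto
  have injI: "inj_on pr Idx" unfolding Idx_def by (rule inj_onI) (use pr_eq_iff in auto)
  define G where "G = pr ` Idx"
  have qG: "q \<notin> G" unfolding G_def Idx_def q_def using pr_eq_iff ku by auto
  have dvdP: "\<And>i. i \<in> Idx \<Longrightarrow> pr i dvd Pn" unfolding Pn_def Idx_def by (rule dvd_prodI) auto
  have nB: "n \<in> B_set r"
  proof -
    have "\<forall>p\<in>prime_factors n. r < p"
    proof
      fix p assume pn: "p \<in> prime_factors n"
      then have pp: "prime p" and pd: "p dvd d * q * Pn" using neq by auto
      then consider "p dvd d" | "p dvd q" | "p dvd Pn" by (metis prime_dvd_mult_iff)
      then show "r < p"
      proof cases
        case 1 then show ?thesis using dpf pp d0 by (auto simp: in_prime_factors_iff)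
      next
        case 2 then show ?thesis using qgt pp qprime primes_dvd_imp_eq by blast
      next
        case 3
        then obtain i where "i \<in> Idx" "p dvd pr i" unfolding Pn_def Idx_def
          using pp prime_dvd_prod_iff by (metis finite_atLeastAtMost)
        then show ?thesis using Idxgt pp pr_prime primes_dvd_imp_eq by metis
      qed
    qed
    then show ?thesis using n0 B_char by auto
  qed
  have Gsub: "insert q G \<subseteq> prime_factors n"
  proof
    fix p assume "p \<in> insert q G"
    then consider "p = q" | "p \<in> G" by auto
    then show "p \<in> prime_factors n"
    proof cases
      case 1 then show ?thesis using qprime n0 neq by (auto intro!: prime_factorsI)
    next
      case 2
      then obtain i where i: "i \<in> Idx" "p = pr i" unfolding G_def by auto
      then have "p dvd n" using dvdP neq by (metis dvd_mult)
      then show ?thesis using i pr_prime n0 by (auto intro!: prime_factorsI)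
    qed
  qed
  have Snb: "real (schemmel r n) \<le> real d * (real q - real r) * V"
  proof -
    obtain c where c: "c \<ge> 1" "n = c * (\<Prod>p\<in>prime_factors n. p)"
      "schemmel r n = c * (\<Prod>p\<in>prime_factors n. p - r)" using S_rep[OF nB] by blast
    have "real (schemmel r n) = real n * (\<Prod>p\<in>prime_factors n. 1 - real r / real p)"
      using S_real(2)[OF nB c(2,3)] .
    also have "\<dots> \<le> real n * (\<Prod>p\<in>insert q G. 1 - real r / real p)"
    proof (rule mult_left_mono)
      show "(\<Prod>p\<in>prime_factors n. 1 - real r / real p) \<le> (\<Prod>p\<in>insert q G. 1 - real r / real p)"
      proof (rule prod_le_sub[OF _ Gsub])
        fix x assume "x \<in> prime_factors n"
        then have "r < x" using nB B_char by auto
        then show "0 \<le> 1 - real r / real x \<and> 1 - real r / real x \<le> 1" using frac_facts less_imp_le by blast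
      qed simp
    qed simp
    also have "(\<Prod>p\<in>insert q G. 1 - real r / real p) = (1 - real r / real q) * W"
      unfolding W_def G_def using qG injI unfolding G_def by (simp add: prod.reindex Idx_def)
    also have "real n * ((1 - real r / real q) * W) = real d * (real q - real r) * V"
    proof -
      have "real q > 0" using qgt by simp
      then show ?thesis unfolding neq PW[symmetric] by (simp add: field_simps)
    qed
    finally show ?thesis .
  qed
  have a4: "real d + 1 \<le> real (pr (k + 1)) - real r"
  proof -
    have "int d + 1 \<le> int (pr (k + 1)) - int r" using assms(4) by simp
    then have "real_of_int (int d + 1) \<le> real_of_int (int (pr (k + 1)) - int r)" by (simp only: of_int_le_iff)
    then show ?thesis by simp
  qed
  have a5: "real d * (real q - real r) < (real d + 1) * (real (pr k) - real r)"
  proof -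
    have "real_of_int (int d * (int q - int r)) < real_of_int ((int d + 1) * (int (pr k) - int r))"
      using assms(5) unfolding q_def by (simp only: of_int_less_iff)
    then show ?thesis by simp
  qed
  have pkgt: "r < pr k" using hb_gt[OF hb] ku by auto
  have Vk: "(\<Prod>i\<in>{b+1..b+(u+1)}. real (pr i) - real r) = V * (real (pr k) - real r)"
    unfolding V_def Idx_def ku by (simp add: prod.nat_ivl_Suc')
  have Vk2: "(\<Prod>i\<in>{b+1..b+(u+2)}. real (pr i) - real r) = V * (real (pr k) - real r) * (real (pr (k+1)) - real r)"
    unfolding V_def Idx_def ku by (simp add: prod.nat_ivl_Suc')
  have main: "\<And>m. m \<in> B_set r \<Longrightarrow> m > n \<Longrightarrow> schemmel r n < schemmel r m"
  proof -
    fix m assume mB: "m \<in> B_set r" and mn: "m > n"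
    obtain c where c: "c \<ge> 1" "m = c * (\<Prod>p\<in>prime_factors m. p)"
      "schemmel r m = c * (\<Prod>p\<in>prime_factors m. p - r)" using S_rep[OF mB] by blast
    define T where "T = prime_factors m"
    define t where "t = card T"
    have Tp: "\<forall>p\<in>T. prime p \<and> r < p" using mB B_char unfolding T_def by auto
    have finT: "finite T" unfolding T_def by simp
    have Sm1: "real (schemmel r m) = real c * (\<Prod>p\<in>T. real p - real r)"
      unfolding T_def by (rule S_real(1)[OF mB c(2,3)])
    have Sm2: "real (schemmel r m) = real m * (\<Prod>p\<in>T. 1 - real r / real p)"
      unfolding T_def by (rule S_real(2)[OF mB c(2,3)])
    have Ugen: "(\<Prod>i\<in>{b+1..b+t}. real (pr i) - real r) \<le> (\<Prod>p\<in>T. real p - real r)"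
      by (rule prod_ge_gen[OF hb, of "\<lambda>x. real x - real r"]) (use finT t_def Tp in auto)
    have "real (schemmel r n) < real (schemmel r m)"
    proof (cases "t \<le> u")
      case True
      have "W \<le> (\<Prod>i\<in>{b+1..b+t}. 1 - real r / real (pr i))"
        unfolding W_def Idx_def
      proof (rule prod_le_sub)
        fix x assume "x \<in> {b+1..b+u}"
        then have "r < pr x" using Idxgt unfolding Idx_def by auto
        then show "0 \<le> 1 - real r / real (pr x) \<and> 1 - real r / real (pr x) \<le> 1" using frac_facts less_imp_le by blast
      qed (use True in auto)
      also have "\<dots> \<le> (\<Prod>p\<in>T. 1 - real r / real p)"
      proof (rule prod_ge_gen[OF hb, of "\<lambda>x. 1 - real r / real x"])
        fix x y :: nat assume "r < x" "x \<le> y"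
        then show "1 - real r / real x \<le> 1 - real r / real y" by (simp add: frac_le)
      next
        fix x :: nat assume "r < x" then show "0 \<le> 1 - real r / real x" using frac_facts less_imp_le by blast
      qed (use finT t_def Tp in auto)
      finally have WR: "W \<le> (\<Prod>p\<in>T. 1 - real r / real p)" .
      have "real (schemmel r n) \<le> real d * (real q - real r) * V" by (rule Snb)
      also have "\<dots> < real d * real q * V" using d0 Vpos rpos by simp
      also have "\<dots> = real n * W" unfolding neq PW[symmetric] by simp
      also have "\<dots> < real m * W" using mn Wpos by simp
      also have "\<dots> \<le> real m * (\<Prod>p\<in>T. 1 - real r / real p)" using WR by (simp add: mult_left_mono)
      finally show ?thesis using Sm2 by simp
    next
      case False
      then consider "t = u + 1" | "t \<ge> u + 2" by linarith
      then show ?thesis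
      proof cases
        case 2
        have "V * (real (pr k) - real r) * (real (pr (k+1)) - real r) \<le> (\<Prod>i\<in>{b+1..b+t}. real (pr i) - real r)"
          unfolding Vk2[symmetric]
        proof (rule prod_ge_sub)
          fix x assume "x \<in> {b+1..b+t}"
          then have "r < pr x" using hb_gt[OF hb] by auto
          then show "1 \<le> real (pr x) - real r" by simp
        qed (use 2 in auto)
        also have "\<dots> \<le> (\<Prod>p\<in>T. real p - real r)" by (rule Ugen)
        also have "\<dots> \<le> real (schemmel r m)" unfolding Sm1
        proof -
          have "0 \<le> (\<Prod>p\<in>T. real p - real r)" using Tp by (auto intro!: prod_nonneg simp: less_imp_le)
          then show "(\<Prod>p\<in>T. real p - real r) \<le> real c * (\<Prod>p\<in>T. real p - real r)"
            using c(1) by (simp add: mult_le_cancel_right1)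
        qed
        finally have X: "V * (real (pr k) - real r) * (real (pr (k+1)) - real r) \<le> real (schemmel r m)" .
        have "real d * (real q - real r) < (real (pr (k+1)) - real r) * (real (pr k) - real r)"
          using a5 a4 pkgt by (smt (verit) mult_right_mono of_nat_less_iff)
        then have "real d * (real q - real r) * V < (real (pr (k+1)) - real r) * (real (pr k) - real r) * V"
          using Vpos by simp
        then show ?thesis using Snb X by (simp add: algebra_simps)
      next
        case 1
        show ?thesis
        proof (cases "c \<ge> d + 1")
          case True
          have "(real d + 1) * (V * (real (pr k) - real r)) \<le> real c * (\<Prod>p\<in>T. real p - real r)"
          proof (rule mult_mono)
            show "real d + 1 \<le> real c" using True by simp
            show "V * (real (pr k) - real r) \<le> (\<Prod>p\<in>T. real p - real r)" using Ugen 1 Vk by simp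
            show "0 \<le> real c" by simp
            show "0 \<le> V * (real (pr k) - real r)" using Vpos pkgt by simp
          qed
          moreover have "real d * (real q - real r) * V < (real d + 1) * (real (pr k) - real r) * V"
            using a5 Vpos by simp
          ultimately show ?thesis using Snb Sm1 by (simp add: algebra_simps)
        next
          case False
          then have cd: "real c \<le> real d" by simp
          have Tne: "T \<noteq> {}" using 1 t_def u1 by auto
          define s where "s = Max T"
          have sT: "s \<in> T" using Max_in finT Tne s_def by blast
          have cT': "card (T - {s}) = u" using 1 t_def sT finT by simp
          have L: "V * (real s * (\<Prod>p\<in>T - {s}. real p) / real Pn - real r)
                \<le> (\<Prod>p\<in>T - {s}. real p - real r) * (real s - real r)"
            unfolding V_def Pn_def Idx_def
            using L3[OF hb, of "T - {s}" u "real s"] finT cT' Tp Max_ge[OF finT] s_def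
            by (auto simp: of_nat_prod)
          have e3: "real s * (\<Prod>p\<in>T - {s}. real p) = real (\<Prod>p\<in>T. p)"
            using finT sT by (simp add: prod.remove of_nat_prod)
          have e4: "(\<Prod>p\<in>T - {s}. real p - real r) * (real s - real r) = (\<Prod>p\<in>T. real p - real r)"
            using finT sT by (simp add: prod.remove mult.commute)
          have mr: "real m = real c * real (\<Prod>p\<in>T. p)" using c(2) unfolding T_def by (metis of_nat_mult)
          have "real (schemmel r m) \<ge> real c * (V * (real (\<Prod>p\<in>T. p) / real Pn - real r))"
            unfolding Sm1 using L e3 e4 by (simp add: mult_left_mono)
          also have "real c * (V * (real (\<Prod>p\<in>T. p) / real Pn - real r)) = V * (real m / real Pn - real c * real r)"
            unfolding mr using Pnpos by (simp add: field_simps)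
          finally have Y: "V * (real m / real Pn - real c * real r) \<le> real (schemmel r m)" .
          have "real n < real m" using mn by simp
          then have "real d * real q < real m / real Pn" unfolding neq using Pnpos by (simp add: field_simps)
          moreover have "real c * real r \<le> real d * real r" using cd by (simp add: mult_right_mono)
          ultimately have "real d * (real q - real r) < real m / real Pn - real c * real r"
            by (simp add: algebra_simps)
          then have "real d * (real q - real r) * V < V * (real m / real Pn - real c * real r)"
            using Vpos by simp
          then show ?thesis using Snb Y by simp
        qed
      qed
    qed
    then show "schemmel r n < schemmel r m" by simp
  qed
  show ?thesis unfolding F_set_def using nB main by auto
qed

end
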